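(* Let $n\in\mathbb{N}$ and let $\frac{a}{cn}$ and $\frac{b}{d}$ be positive rationals with $a,b,c,d\in\mathbb{N}$ and $|ad-bcn|=1$. Then every real $\alpha$ with $\min\{\frac{a}{cn},\frac{b}{d}\}\le\alpha\le\max\{\frac{a}{cn},\frac{b}{d}\}$ is not an infinite loop mod $n$.
   Context: For $\alpha$ with continued fraction $[a_0;a_1,\ldots]$ and convergent denominators $q_{-1}=0,q_0=1,q_k=a_kq_{k-1}+q_{k-2}$, the semi-convergent denominators are $mq_k+q_{k-1}$, $0\le m\le a_{k+1}$. A real $\alpha>0$ is an \emph{infinite loop mod $n$} if none of its semi-convergent denominators is divisible by $n$, except $q_{-1}=0$. For rational $\alpha$, both finite continued fraction expansions are considered and each is regarded as ending with a partial quotient equal to $\infty$, so that after the last convergent $p_k/q_k$ all semi-convergents $(mp_k+p_{k-1})/(mq_k+q_{k-1})$, $m\ge0$, are included. *)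

theory Defs
  imports Complex_Main
begin

text \<open>Partial quotients are a sequence cf :: nat => int (cf 0 = a_0, cf k = a_k).
  Index shift: cf_q cf (k+1) = q_k, cf_q cf 0 = q_{-1} = 0; likewise for p.\<close>

fun cf_q :: "(nat \<Rightarrow> int) \<Rightarrow> nat \<Rightarrow> int" where
  "cf_q cf 0 = 0"
| "cf_q cf (Suc 0) = 1"
| "cf_q cf (Suc (Suc k)) = cf (Suc k) * cf_q cf (Suc k) + cf_q cf k"

fun cf_p :: "(nat \<Rightarrow> int) \<Rightarrow> nat \<Rightarrow> int" where
  "cf_p cf 0 = 1"
| "cf_p cf (Suc 0) = cf 0"
| "cf_p cf (Suc (Suc k)) = cf (Suc k) * cf_p cf (Suc k) + cf_p cf k"

definition cf_inf_exp :: "real \<Rightarrow> (nat \<Rightarrow> int) \<Rightarrow> bool" where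
  "cf_inf_exp \<alpha> cf \<longleftrightarrow> (\<forall>k\<ge>1. cf k \<ge> 1) \<and>
     (\<lambda>k. real_of_int (cf_p cf (k+1)) / real_of_int (cf_q cf (k+1))) \<longlonglongrightarrow> \<alpha>"

definition cf_fin_exp :: "real \<Rightarrow> (nat \<Rightarrow> int) \<Rightarrow> nat \<Rightarrow> bool" where
  "cf_fin_exp \<alpha> cf K \<longleftrightarrow> (\<forall>k. 1 \<le> k \<and> k \<le> K \<longrightarrow> cf k \<ge> 1) \<and>
     \<alpha> = real_of_int (cf_p cf (K+1)) / real_of_int (cf_q cf (K+1))"

definition semiconv_dens_inf :: "(nat \<Rightarrow> int) \<Rightarrow> int set" where
  "semiconv_dens_inf cf =
     {m * cf_q cf (k+1) + cf_q cf k | k m. 0 \<le> m \<and> m \<le> cf (k+1)}"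

text \<open>For a finite expansion of length K the last partial quotient a_{K+1} is
  regarded as infinity, so all m >= 0 are allowed at k = K.\<close>
definition semiconv_dens_fin :: "(nat \<Rightarrow> int) \<Rightarrow> nat \<Rightarrow> int set" where
  "semiconv_dens_fin cf K =
     {m * cf_q cf (k+1) + cf_q cf k | k m. k < K \<and> 0 \<le> m \<and> m \<le> cf (k+1)}
     \<union> {m * cf_q cf (K+1) + cf_q cf K | m. 0 \<le> m}"

text \<open>alpha > 0 is an infinite loop mod n if no semi-convergent denominator
  (of any of its continued fraction expansions) other than q_{-1} = 0 is
  divisible by n. (The only semi-convergent denominator equal to 0 is q_{-1}.)\<close>
definition infinite_loop :: "nat \<Rightarrow> real \<Rightarrow> bool" where
  "infinite_loop n \<alpha> \<longleftrightarrow> \<alpha> > 0 \<and>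
     (\<forall>cf. cf_inf_exp \<alpha> cf \<longrightarrow> (\<forall>s\<in>semiconv_dens_inf cf. s \<noteq> 0 \<longrightarrow> \<not> int n dvd s)) \<and>
     (\<forall>cf K. cf_fin_exp \<alpha> cf K \<longrightarrow> (\<forall>s\<in>semiconv_dens_fin cf K. s \<noteq> 0 \<longrightarrow> \<not> int n dvd s))"

end

theory Submission
  imports Defs
begin


fun QQ :: "(nat \<Rightarrow> int) \<Rightarrow> nat \<Rightarrow> int" where
  "QQ c 0 = 1" | "QQ c (Suc 0) = 0" | "QQ c (Suc (Suc j)) = c j * QQ c (Suc j) + QQ c j"
fun PP :: "(nat \<Rightarrow> int) \<Rightarrow> nat \<Rightarrow> int" where
  "PP c 0 = 0" | "PP c (Suc 0) = 1" | "PP c (Suc (Suc j)) = c j * PP c (Suc j) + PP c j"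

lemma QQ_cf: "QQ c (Suc j) = cf_q c j"
  by (induction c j rule: cf_q.induct) auto
lemma PP_cf: "PP c (Suc j) = cf_p c j"
  by (induction c j rule: cf_p.induct) auto

lemma delta: "PP c (Suc j) * QQ c j - PP c j * QQ c (Suc j) = (-1)^j"
proof (induction j)
  case 0 then show ?case by simp
next
  case (Suc j)
  have "PP c (Suc (Suc j)) * QQ c (Suc j) - PP c (Suc j) * QQ c (Suc (Suc j))
     = - (PP c (Suc j) * QQ c j - PP c j * QQ c (Suc j))" by (simp add: algebra_simps)
  then show ?case using Suc by simp
qed

lemma QQ_agree: "(\<forall>i<j. f i = g i) \<Longrightarrow> QQ f (Suc j) = QQ g (Suc j) \<and> QQ f j = QQ g j"
  by (induction j) auto
lemma PP_agree: "(\<forall>i<j. f i = g i) \<Longrightarrow> PP f (Suc j) = PP g (Suc j) \<and> PP f j = PP g j"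
  by (induction j) auto

lemma QQ_ge: "(\<forall>i. 1 \<le> i \<and> i \<le> j \<longrightarrow> 1 \<le> c i) \<Longrightarrow>
   1 \<le> QQ c (Suc (Suc j)) \<and> 0 \<le> QQ c (Suc j) \<and> QQ c (Suc j) \<le> QQ c (Suc (Suc j))"
proof (induction j)
  case 0 then show ?case by simp
next
  case (Suc j)
  then have IH: "1 \<le> QQ c (Suc (Suc j)) \<and> 0 \<le> QQ c (Suc j)" by auto
  have "1 \<le> c (Suc j)" using Suc.prems by auto
  then have "QQ c (Suc (Suc j)) \<le> c (Suc j) * QQ c (Suc (Suc j))"
    using IH by (metis mult_1 mult_right_mono order_trans zero_le_one)
  moreover have "QQ c (Suc (Suc (Suc j))) = c (Suc j) * QQ c (Suc (Suc j)) + QQ c (Suc j)" by simp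
  ultimately show ?case using IH by linarith
qed

lemma QQ_grow: "(\<forall>i. 1 \<le> i \<and> i \<le> k \<longrightarrow> 1 \<le> c i) \<Longrightarrow> int k + 1 \<le> 2 * QQ c (Suc (Suc k))"
proof (induction k rule: less_induct)
  case (less k)
  show ?case
  proof (cases "k < 2")
    case True
    then consider "k = 0" | "k = 1" by linarith
    then show ?thesis
    proof cases
      case 1 then show ?thesis by simp
    next
      case 2 then show ?thesis using less.prems by simp
    qed
  next
    case False
    then obtain i where k: "k = Suc (Suc i)" by (metis add_2_eq_Suc le_add_diff_inverse not_less)
    have IH: "int i + 1 \<le> 2 * QQ c (Suc (Suc i))" using less k by auto
    have g: "1 \<le> QQ c (Suc (Suc (Suc i))) \<and> 0 \<le> QQ c (Suc (Suc i))"
      using QQ_ge[of "Suc i" c] less.prems k by auto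
    have ck: "1 \<le> c k" using less.prems k by auto
    have "QQ c (Suc (Suc (Suc i))) \<le> c k * QQ c (Suc (Suc (Suc i)))"
      using g ck by (metis mult_1 mult_right_mono order_trans zero_le_one)
    moreover have "QQ c (Suc (Suc k)) = c k * QQ c (Suc (Suc (Suc i))) + QQ c (Suc (Suc i))" using k by simp
    ultimately have "QQ c (Suc (Suc k)) \<ge> QQ c (Suc (Suc i)) + 1" using g by linarith
    then show ?thesis using IH k by simp
  qed
qed



definition vadd :: "int \<times> int \<Rightarrow> int \<times> int \<Rightarrow> int \<times> int" where
  "vadd u v = (fst u + fst v, snd u + snd v)"
definition vsc :: "int \<Rightarrow> int \<times> int \<Rightarrow> int \<times> int" where
  "vsc t u = (t * fst u, t * snd u)"
definition UP :: "'a \<Rightarrow> 'a \<Rightarrow> 'a \<Rightarrow> 'a \<Rightarrow> bool" where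
  "UP u w a b \<longleftrightarrow> (u = a \<and> w = b) \<or> (u = b \<and> w = a)"

lemma UP_sym: "UP u w a b \<longleftrightarrow> UP w u a b" "UP u w a b \<longleftrightarrow> UP u w b a"
  unfolding UP_def by auto

definition Bv :: "(nat \<Rightarrow> int) \<Rightarrow> nat \<Rightarrow> int \<times> int" where
  "Bv c j = (PP c j, QQ c j)"
definition Mv :: "(nat \<Rightarrow> int) \<Rightarrow> nat \<Rightarrow> int \<Rightarrow> int \<times> int" where
  "Mv c j m = vadd (vsc m (Bv c (Suc j))) (Bv c j)"

lemma Mv_c: "Mv c j (c j) = Bv c (Suc (Suc j))"
  by (simp add: Mv_def Bv_def vadd_def vsc_def)
lemma Mv_0: "Mv c j 0 = Bv c j"
  by (simp add: Mv_def Bv_def vadd_def vsc_def)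
lemma Mv_Suc: "Mv c j (m + 1) = vadd (Mv c j m) (Bv c (Suc j))"
  by (simp add: Mv_def Bv_def vadd_def vsc_def algebra_simps)

definition LL :: "real \<Rightarrow> int \<times> int \<Rightarrow> real" where
  "LL \<alpha> u = of_int (fst u) - \<alpha> * of_int (snd u)"

lemma LL_add: "LL \<alpha> (vadd u v) = LL \<alpha> u + LL \<alpha> v"
  by (simp add: LL_def vadd_def algebra_simps)
lemma LL_sc: "LL \<alpha> (vsc t u) = of_int t * LL \<alpha> u"
  by (simp add: LL_def vsc_def algebra_simps)


lemma dom:
  fixes h k h' k' :: int
  assumes "0\<le>h" "0\<le>k" "0\<le>h'" "0\<le>k'" "\<bar>h*k' - h'*k\<bar> = 1"
  shows "(h=0\<and>k=1\<and>h'=1\<and>k'=0) \<or> (h=1\<and>k=0\<and>h'=0\<and>k'=1) \<or> (h' \<le> h \<and> k' \<le> k) \<or> (h \<le> h' \<and> k \<le> k')"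
proof (rule ccontr)
  assume na: "\<not> ?thesis"
  then consider "h < h'" "k' < k" | "h' < h" "k < k'" by linarith
  then show False
  proof cases
    case 1
    have "(h+1)*(k'+1) \<le> h' * k" using 1 assms by (intro mult_mono) auto
    then have "h'*k - h*k' \<ge> h + k' + 1" by (simp add: algebra_simps)
    then have e: "h'*k - h*k' = 1" "h = 0" "k' = 0" using assms by auto
    then have "h' * k = 1" by simp
    then have "h' = 1 \<and> k = 1" using assms by (simp add: pos_zmult_eq_1_iff zmult_eq_1_iff)
    then show False using na e by auto
  next
    case 2
    have "(h'+1)*(k+1) \<le> h * k'" using 2 assms by (intro mult_mono) auto
    then have "h*k' - h'*k \<ge> h' + k + 1" by (simp add: algebra_simps)
    then have e: "h*k' - h'*k = 1" "h' = 0" "k = 0" using assms by auto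
    then have "h * k' = 1" by simp
    then have "h = 1 \<and> k' = 1" using assms by (simp add: zmult_eq_1_iff)
    then show False using na e by auto
  qed
qed

locale desc =
  fixes c :: "nat \<Rightarrow> int" and x :: "nat \<Rightarrow> real" and \<alpha> :: real and N :: nat
  assumes ident: "\<And>j. j \<le> N \<Longrightarrow>
      \<alpha> * (of_int (QQ c (Suc j)) * x j + of_int (QQ c j)) = of_int (PP c (Suc j)) * x j + of_int (PP c j)"
  and Dpos: "\<And>j. j \<le> N \<Longrightarrow> of_int (QQ c (Suc j)) * x j + of_int (QQ c j) > 0"
  and cx_lt: "\<And>j. j < N \<Longrightarrow> of_int (c j) < x j"
  and cx_le: "of_int (c N) \<le> x N"
  and c_ge1: "\<And>j. 1 \<le> j \<Longrightarrow> j \<le> N \<Longrightarrow> 1 \<le> c j"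
  and c0: "0 \<le> c 0"
begin

abbreviation "D j \<equiv> of_int (QQ c (Suc j)) * x j + of_int (QQ c j)"
abbreviation "L \<equiv> LL \<alpha>"

lemma LM: assumes "j \<le> N"
  shows "L (Mv c j m) * D j = (-1)^j * (of_int m - x j)"
proof -
  have i: "\<alpha> * D j = of_int (PP c (Suc j)) * x j + of_int (PP c j)" using ident assms by blast
  have d: "real_of_int (PP c (Suc j)) * of_int (QQ c j) - of_int (PP c j) * of_int (QQ c (Suc j)) = (-1)^j"
    using arg_cong[OF delta[of c j], of real_of_int] by simp
  have "L (Mv c j m) * D j = of_int (m * PP c (Suc j) + PP c j) * D j - of_int (m * QQ c (Suc j) + QQ c j) * (\<alpha> * D j)"
    by (simp add: LL_def Mv_def vadd_def vsc_def Bv_def algebra_simps)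
  also have "\<dots> = of_int (m * PP c (Suc j) + PP c j) * D j - of_int (m * QQ c (Suc j) + QQ c j) * (of_int (PP c (Suc j)) * x j + of_int (PP c j))"
    using i by simp
  also have "\<dots> = (real_of_int (PP c (Suc j)) * of_int (QQ c j) - of_int (PP c j) * of_int (QQ c (Suc j))) * (of_int m - x j)"
    by (simp add: algebra_simps)
  finally show ?thesis using d by simp
qed

lemma LB: assumes "j \<le> N"
  shows "L (Bv c (Suc j)) * D j = (-1)^j"
proof -
  have i: "\<alpha> * D j = of_int (PP c (Suc j)) * x j + of_int (PP c j)" using ident assms by blast
  have d: "real_of_int (PP c (Suc j)) * of_int (QQ c j) - of_int (PP c j) * of_int (QQ c (Suc j)) = (-1)^j"
    using arg_cong[OF delta[of c j], of real_of_int] by simp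
  have "L (Bv c (Suc j)) * D j = of_int (PP c (Suc j)) * D j - of_int (QQ c (Suc j)) * (\<alpha> * D j)"
    by (simp add: LL_def Bv_def algebra_simps)
  also have "\<dots> = of_int (PP c (Suc j)) * D j - of_int (QQ c (Suc j)) * (of_int (PP c (Suc j)) * x j + of_int (PP c j))"
    using i by simp
  also have "\<dots> = real_of_int (PP c (Suc j)) * of_int (QQ c j) - of_int (PP c j) * of_int (QQ c (Suc j))"
    by (simp add: algebra_simps)
  finally show ?thesis using d by simp
qed

lemma LB_ne: "j \<le> N \<Longrightarrow> L (Bv c (Suc j)) \<noteq> 0"
  using LB[of j] by auto

lemma LE0: "x N = of_int (c N) \<Longrightarrow> L (Bv c (Suc (Suc N))) = 0"
proof -
  assume "x N = of_int (c N)"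
  then have "L (Mv c N (c N)) * D N = 0" using LM[of N "c N"] by simp
  then show ?thesis using Dpos[of N] Mv_c[of c N] by simp
qed

lemma QQ_N: "1 \<le> QQ c (Suc (Suc N)) \<and> 0 \<le> QQ c (Suc N)"
  using QQ_ge[of N c] c_ge1 by auto

definition Fam :: "int \<times> int \<Rightarrow> int \<times> int \<Rightarrow> bool" where
  "Fam u w \<longleftrightarrow> (\<exists>j m. j \<le> N \<and> 0 \<le> m \<and> m \<le> c j \<and> UP u w (Mv c j m) (Bv c (Suc j)))
    \<or> (x N = of_int (c N) \<and> (\<exists>t\<ge>1. UP u w (Bv c (Suc (Suc N))) (vadd (Bv c (Suc N)) (vsc t (Bv c (Suc (Suc N)))))
          \<or> UP u w (Bv c (Suc (Suc N))) (vadd (vsc t (Bv c (Suc (Suc N)))) (vsc (-1) (Bv c (Suc N))))))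
    \<or> (of_int (c N) < x N \<and> QQ c (Suc N) < snd u + snd w)"

lemma Fam_sym: "Fam u w \<Longrightarrow> Fam w u"
  unfolding Fam_def using UP_sym by (metis add.commute)

lemma vadd_comm: "vadd u v = vadd v u" by (simp add: vadd_def add.commute)

lemma sq_pos: "(r::real) \<noteq> 0 \<Longrightarrow> 0 < r * r"
  by (metis linorder_neq_iff mult_neg_neg mult_pos_pos)

lemma cx_le_all: "j \<le> N \<Longrightarrow> of_int (c j) \<le> x j"
  using cx_lt[of j] cx_le by (cases "j = N") auto

lemma child:
  assumes F: "Fam p w" and nn: "0 \<le> snd p" "0 \<le> snd w"
    and ct: "L (vadd p w) * L w \<le> 0"
  shows "Fam (vadd p w) w"
proof -
  define E where "E = Bv c (Suc (Suc N))"
  define B where "B = Bv c (Suc N)"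
  have LBn: "L B \<noteq> 0" unfolding B_def using LB_ne by simp
  have EM: "E = Mv c N (c N)" unfolding E_def using Mv_c by simp
  have qq: "1 \<le> snd E" "0 \<le> snd B" using QQ_N unfolding E_def B_def Bv_def by auto
  from F consider (P) j m where "j \<le> N" "0 \<le> m" "m \<le> c j" "UP p w (Mv c j m) (Bv c (Suc j))"
    | (F2) t where "x N = of_int (c N)" "t \<ge> 1" "UP p w E (vadd B (vsc t E))"
    | (F3) t where "x N = of_int (c N)" "t \<ge> 1" "UP p w E (vadd (vsc t E) (vsc (-1) B))"
    | (G) "of_int (c N) < x N" "QQ c (Suc N) < snd p + snd w"
    unfolding Fam_def E_def B_def by blast
  then show ?thesis
  proof cases
    case P
    have "\<exists>j m. j \<le> N \<and> 0 \<le> m \<and> m \<le> c j \<and> UP p w (Mv c j m) (Bv c (Suc j)) \<and> (m < c j \<or> j = N)"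
    proof (cases "m < c j \<or> j = N")
      case True then show ?thesis using P by blast
    next
      case False
      then have "m = c j" "j < N" using P by auto
      then have "UP p w (Mv c (Suc j) 0) (Bv c (Suc (Suc j)))"
        using P(4) Mv_0[of c "Suc j"] Mv_c[of c j] UP_sym by metis
      moreover have "0 < c (Suc j)" using c_ge1[of "Suc j"] \<open>j < N\<close> by simp
      ultimately show ?thesis using \<open>j < N\<close> by (intro exI[of _ "Suc j"] exI[of _ 0]) auto
    qed
    then obtain j m where jm: "j \<le> N" "0 \<le> m" "m \<le> c j" "UP p w (Mv c j m) (Bv c (Suc j))"
        "m < c j \<or> j = N" by blast
    from jm(4) consider (o1) "p = Mv c j m" "w = Bv c (Suc j)" | (o2) "p = Bv c (Suc j)" "w = Mv c j m"
      unfolding UP_def by blast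
    then show ?thesis
    proof cases
      case o1
      then have va: "vadd p w = Mv c j (m+1)" using Mv_Suc by simp
      show ?thesis
      proof (cases "m < c j")
        case True
        have "UP (vadd p w) w (Mv c j (m+1)) (Bv c (Suc j))" using va o1 by (simp add: UP_def)
        then show ?thesis unfolding Fam_def using jm True
          by (intro disjI1 exI[of _ j] exI[of _ "m+1"]) auto
      next
        case False
        then have jN: "j = N" "m = c N" using jm by auto
        show ?thesis
        proof (cases "x N = of_int (c N)")
          case True
          have "L p = 0" using LE0[OF True] o1 jN Mv_c by simp
          then have "L (vadd p w) * L w = L B * L B" using o1 jN by (simp add: LL_add B_def)
          then show ?thesis using ct sq_pos[OF LBn] by linarith
        next
          case False
          then have "of_int (c N) < x N" using cx_le by simp
          moreover have "snd (vadd p w) + snd w = snd E + 2 * snd B"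
            using o1 jN EM by (simp add: vadd_def B_def)
          ultimately show ?thesis unfolding Fam_def using qq by (simp add: B_def Bv_def)
        qed
      qed
    next
      case o2
      then have va: "vadd p w = Mv c j (m+1)" using Mv_Suc vadd_comm by simp
      have Dp: "D j > 0" using Dpos jm(1) by simp
      have "(L (vadd p w) * D j) * (L w * D j) = (L (vadd p w) * L w) * (D j * D j)"
        by (simp add: algebra_simps)
      also have "\<dots> \<le> 0" using ct Dp by (simp add: mult_nonpos_nonneg)
      finally have "((-1)^j * (of_int (m+1) - x j)) * ((-1)^j * (of_int m - x j)) \<le> 0"
        using LM[OF jm(1)] va o2 by simp
      then have "(-1::real)^j * (of_int m + 1 - x j) * ((-1)^j * (of_int m - x j)) \<le> 0" by simp
      moreover have "((-1::real)^j) * (-1)^j = 1" by (induction j) auto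
      moreover have "(-1::real)^j * (of_int m + 1 - x j) * ((-1)^j * (of_int m - x j))
          = ((-1)^j * (-1)^j) * ((of_int m + 1 - x j) * (of_int m - x j))" by (simp add: algebra_simps)
      ultimately have pr: "(of_int m + 1 - x j) * (of_int m - x j) \<le> 0" by simp
      show ?thesis
      proof (cases "m < c j")
        case True
        have "of_int m < x j" using True cx_le_all[OF jm(1)] by linarith
        then have "of_int m + 1 - x j \<ge> 0" using pr
          using mult_neg_neg[of "of_int m + 1 - x j" "of_int m - x j"] by linarith
        moreover have "of_int m + 1 \<le> real_of_int (c j)" using True by linarith
        ultimately have xe: "x j = of_int (c j)" "c j = m + 1" using cx_le_all[OF jm(1)] by linarith+
        then have "j = N" using cx_lt[of j] jm(1) by fastforce
        have "vadd p w = E" using va xe \<open>j = N\<close> EM by simp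
        moreover have "w = vadd (vsc 1 E) (vsc (-1) B)"
          using o2 \<open>j = N\<close> xe unfolding EM B_def
          by (simp add: Mv_def vadd_def vsc_def Bv_def algebra_simps)
        ultimately show ?thesis unfolding Fam_def using xe \<open>j = N\<close>
          by (intro disjI2 disjI1) (auto simp: UP_def E_def B_def)
      next
        case False
        then have jN: "j = N" "m = c N" using jm by auto
        show ?thesis
        proof (cases "x N = of_int (c N)")
          case True
          have "vadd p w = vadd B (vsc 1 E)" "w = E" using o2 jN EM
            by (auto simp: vadd_def vsc_def B_def)
          then show ?thesis unfolding Fam_def using True
            by (intro disjI2 disjI1) (auto simp: UP_def E_def B_def)
        next
          case False
          then have "of_int (c N) < x N" using cx_le by simp
          moreover have "snd (vadd p w) + snd w = snd B + 2 * snd E"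
            using o2 jN EM by (simp add: vadd_def B_def)
          ultimately show ?thesis unfolding Fam_def using qq by (simp add: B_def Bv_def)
        qed
      qed
    qed
  next
    case F2
    have LE: "L E = 0" using LE0[OF F2(1)] E_def by simp
    from F2(3) consider (o1) "p = E" "w = vadd B (vsc t E)" | (o2) "p = vadd B (vsc t E)" "w = E"
      unfolding UP_def by blast
    then show ?thesis
    proof cases
      case o1
      then have "L (vadd p w) * L w = L B * L B" using LE by (simp add: LL_add LL_sc)
      then show ?thesis using ct sq_pos[OF LBn] by linarith
    next
      case o2
      then have "vadd p w = vadd B (vsc (t+1) E)" by (simp add: vadd_def vsc_def algebra_simps)
      then show ?thesis unfolding Fam_def using F2 o2
        by (intro disjI2 disjI1) (auto simp: UP_def E_def B_def intro!: exI[of _ "t+1"])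
    qed
  next
    case F3
    have LE: "L E = 0" using LE0[OF F3(1)] E_def by simp
    from F3(3) consider (o1) "p = E" "w = vadd (vsc t E) (vsc (-1) B)" | (o2) "p = vadd (vsc t E) (vsc (-1) B)" "w = E"
      unfolding UP_def by blast
    then show ?thesis
    proof cases
      case o1
      then have "L (vadd p w) * L w = L B * L B" using LE by (simp add: LL_add LL_sc)
      then show ?thesis using ct sq_pos[OF LBn] by linarith
    next
      case o2
      then have "vadd p w = vadd (vsc (t+1) E) (vsc (-1) B)" by (simp add: vadd_def vsc_def algebra_simps)
      then show ?thesis unfolding Fam_def using F3 o2
        by (intro disjI2 disjI1) (auto simp: UP_def E_def B_def intro!: exI[of _ "t+1"])
    qed
  next
    case G
    then show ?thesis unfolding Fam_def using nn by (simp add: vadd_def)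
  qed
qed

lemma descent:
  "0 \<le> fst u \<Longrightarrow> 0 \<le> snd u \<Longrightarrow> 0 \<le> fst w \<Longrightarrow> 0 \<le> snd w \<Longrightarrow>
   \<bar>fst u * snd w - fst w * snd u\<bar> = 1 \<Longrightarrow> L u * L w \<le> 0 \<Longrightarrow> Fam u w"
proof (induction "nat (fst u + snd u + fst w + snd w)" arbitrary: u w rule: less_induct)
  case less
  obtain h k h' k' where u: "u = (h,k)" and w: "w = (h',k')" by (cases u, cases w) auto
  have root: "Fam (0,1) (1,0)"
  proof -
    have "UP (0,1) (1,0) (Mv c 0 0) (Bv c (Suc 0))"
      by (simp add: UP_def Mv_0 Bv_def)
    then show ?thesis unfolding Fam_def using c0 by blast
  qed
  from dom[of h k h' k'] less.prems u w
  consider "h=0\<and>k=1\<and>h'=1\<and>k'=0" | "h=1\<and>k=0\<and>h'=0\<and>k'=1" | "h' \<le> h \<and> k' \<le> k" | "h \<le> h' \<and> k \<le> k'"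
    by auto
  then show ?case
  proof cases
    case 1 then show ?thesis using root u w by simp
  next
    case 2 then show ?thesis using root Fam_sym u w by simp
  next
    case 3
    define p where "p = (h - h', k - k')"
    have wnz: "h' + k' > 0" using less.prems u w 3 by (cases "h' = 0"; cases "k' = 0") auto
    have Lp: "L p = L u - L w" by (simp add: LL_def p_def u w algebra_simps)
    have "L p * L w = L u * L w - L w * L w" unfolding Lp by (simp add: algebra_simps)
    also have "\<dots> \<le> 0" using less.prems(6) by (smt (verit) zero_le_square)
    finally have ct: "L p * L w \<le> 0" .
    have "Fam p w"
      using less.hyps[of p w] less.prems u w 3 wnz ct
      by (simp add: p_def algebra_simps)
    moreover have "vadd p w = u" by (simp add: vadd_def p_def u w)
    ultimately show ?thesis using child[of p w] less.prems u w 3 by (simp add: p_def)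
  next
    case 4
    define p where "p = (h' - h, k' - k)"
    have unz: "h + k > 0" using less.prems u w 4 by (cases "h = 0"; cases "k = 0") auto
    have Lp: "L p = L w - L u" by (simp add: LL_def p_def u w algebra_simps)
    have "L p * L u = L u * L w - L u * L u" unfolding Lp by (simp add: algebra_simps)
    also have "\<dots> \<le> 0" using less.prems(6) by (smt (verit) zero_le_square)
    finally have ct: "L p * L u \<le> 0" .
    have det: "\<bar>fst p * snd u - fst u * snd p\<bar> = 1"
      using less.prems(5) u w by (simp add: p_def algebra_simps abs_minus_commute)
    have "Fam p u"
      using less.hyps[of p u] less.prems u w 4 unz ct det
      by (simp add: p_def algebra_simps)
    moreover have "vadd p u = w" by (simp add: vadd_def p_def u w)
    ultimately have "Fam w u" using child[of p u] less.prems u w 4 by (simp add: p_def mult.commute)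
    then show ?thesis using Fam_sym by blast
  qed
qed

end


primrec gx :: "real \<Rightarrow> nat \<Rightarrow> real" where
  "gx a 0 = a" | "gx a (Suc j) = 1 / (gx a j - of_int \<lfloor>gx a j\<rfloor>)"
definition gc :: "real \<Rightarrow> nat \<Rightarrow> int" where "gc a j = \<lfloor>gx a j\<rfloor>"

abbreviation TT :: "real \<Rightarrow> nat \<Rightarrow> bool" where
  "TT a j \<equiv> \<forall>i<j. gx a i \<noteq> of_int (gc a i)"

lemma gx_gt1: assumes "TT a (Suc i)" shows "gx a (Suc i) > 1"
proof -
  let ?f = "gx a i - of_int \<lfloor>gx a i\<rfloor>"
  have "?f \<noteq> 0" using assms by (auto simp: gc_def)
  moreover have "0 \<le> ?f" "?f < 1" by linarith+
  ultimately have "0 < ?f" "?f < 1" by (metis less_le)+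
  then show ?thesis by simp
qed

lemma gc_ge1: "TT a j \<Longrightarrow> 1 \<le> j \<Longrightarrow> 1 \<le> gc a j"
  using gx_gt1[where a=a and i="j - 1"] unfolding gc_def
  by (metis Suc_diff_1 floor_mono floor_one le_less less_le_trans not_one_le_zero zero_less_iff_neq_zero)

lemma gident: "TT a j \<Longrightarrow>
  a * (of_int (QQ (gc a) (Suc j)) * gx a j + of_int (QQ (gc a) j)) =
     of_int (PP (gc a) (Suc j)) * gx a j + of_int (PP (gc a) j)"
proof (induction j)
  case 0 then show ?case by simp
next
  case (Suc j)
  let ?c = "gc a"
  define f where "f = gx a j - of_int (gc a j)"
  have fnz: "f \<noteq> 0" using Suc.prems unfolding f_def by auto
  have xs: "gx a (Suc j) = 1 / f" unfolding f_def gc_def by simp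
  have xj: "gx a j = of_int (gc a j) + f" unfolding f_def by simp
  have IH: "a * (of_int (QQ ?c (Suc j)) * gx a j + of_int (QQ ?c j)) =
     of_int (PP ?c (Suc j)) * gx a j + of_int (PP ?c j)" using Suc by auto
  have "a * (of_int (QQ ?c (Suc (Suc j))) * gx a (Suc j) + of_int (QQ ?c (Suc j))) * f
      = a * (of_int (QQ ?c (Suc j)) * gx a j + of_int (QQ ?c j))"
    using fnz unfolding xs xj by (simp add: field_simps)
  also have "\<dots> = of_int (PP ?c (Suc j)) * gx a j + of_int (PP ?c j)" by (rule IH)
  also have "\<dots> = (of_int (PP ?c (Suc (Suc j))) * gx a (Suc j) + of_int (PP ?c (Suc j))) * f"
    using fnz unfolding xs xj by (simp add: field_simps)
  finally show ?case using fnz by simp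
qed

lemma TT_mono: "TT a j \<Longrightarrow> i \<le> j \<Longrightarrow> TT a i" by auto

lemma gQQ: "TT a j \<Longrightarrow> 1 \<le> QQ (gc a) (Suc (Suc j)) \<and> 0 \<le> QQ (gc a) (Suc j)"
  using QQ_ge[of j "gc a"] gc_ge1[where a=a] by (meson TT_mono less_le_trans order.refl)

lemma gDpos: assumes "a > 0" "TT a j"
  shows "of_int (QQ (gc a) (Suc j)) * gx a j + of_int (QQ (gc a) j) > 0"
proof (cases j)
  case 0 then show ?thesis by simp
next
  case (Suc i)
  have "1 \<le> QQ (gc a) (Suc (Suc i)) \<and> 0 \<le> QQ (gc a) (Suc i)" using gQQ[where a=a and j=i] assms Suc by auto
  moreover have "gx a j > 1" using gx_gt1 assms Suc by simp
  ultimately show ?thesis using Suc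
    by (smt (verit, best) of_int_le_iff of_int_1 mult_less_cancel_left1 of_int_0_le_iff)
qed

lemma desc_inst: assumes "a > 0" "TT a N" shows "desc (gc a) (gx a) a N"
proof
  fix j assume "j \<le> N"
  then have t: "TT a j" using assms by auto
  show "a * (of_int (QQ (gc a) (Suc j)) * gx a j + of_int (QQ (gc a) j)) =
     of_int (PP (gc a) (Suc j)) * gx a j + of_int (PP (gc a) j)" using gident[OF t] .
  show "of_int (QQ (gc a) (Suc j)) * gx a j + of_int (QQ (gc a) j) > 0" using gDpos[OF assms(1) t] .
next
  fix j assume "j < N"
  then have "gx a j \<noteq> of_int \<lfloor>gx a j\<rfloor>" using assms(2) unfolding gc_def by auto
  then show "of_int (gc a j) < gx a j" unfolding gc_def
    by (smt (verit) of_int_floor_le)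
next
  show "of_int (gc a N) \<le> gx a N" unfolding gc_def by simp
next
  fix j assume "1 \<le> j" "j \<le> N"
  then show "1 \<le> gc a j" using gc_ge1[where a=a and j=j] assms(2) by auto
next
  show "0 \<le> gc a 0" using assms(1) by (simp add: gc_def)
qed

lemma rat_step:
  assumes "a = of_int r0 / of_int s0" "s0 > 0"
  shows "TT a j \<Longrightarrow> \<exists>r s. s > 0 \<and> gx a j = of_int r / of_int s \<and> s + int j \<le> s0"
proof (induction j)
  case 0 then show ?case using assms by auto
next
  case (Suc j)
  then obtain r s where rs: "s > 0" "gx a j = of_int r / of_int s" "s + int j \<le> s0" by auto
  have ne: "gx a j \<noteq> of_int (gc a j)" using Suc.prems by auto
  have fl: "gc a j = r div s" unfolding gc_def rs(2) by (rule floor_divide_of_int_eq)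
  have eq: "gx a j - of_int (gc a j) = of_int (r mod s) / of_int s"
  proof -
    have "r = r div s * s + r mod s" by simp
    then have "real_of_int r = of_int (r div s) * of_int s + of_int (r mod s)"
      by (metis of_int_add of_int_mult)
    then show ?thesis unfolding fl rs(2) using rs(1) by (simp add: field_simps)
  qed
  have "r mod s \<noteq> 0" using ne eq by auto
  moreover have "0 \<le> r mod s" "r mod s < s" using rs(1) by auto
  ultimately have m: "0 < r mod s" "r mod s < s" by auto
  have "gx a (Suc j) = of_int s / of_int (r mod s)"
    using eq rs(1) by (simp add: gc_def)
  moreover have "r mod s + int (Suc j) \<le> s0" using m rs(3) by linarith
  ultimately show ?case using m by blast
qed

lemma rat_term: assumes "a \<in> \<rat>" obtains N where "TT a N" "gx a N = of_int (gc a N)"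
proof -
  obtain r0 s0 where rs: "s0 > 0" "a = of_int r0 / of_int s0" using Rats_cases'[OF assms] by metis
  have "\<not> TT a (nat s0)"
  proof
    assume "TT a (nat s0)"
    then obtain r s where "s > 0" "s + int (nat s0) \<le> s0" using rat_step[OF rs(2) rs(1)] by blast
    then show False using rs(1) by simp
  qed
  then have "\<exists>i. gx a i = of_int (gc a i)" by auto
  then obtain N where "gx a N = of_int (gc a N)" "\<forall>i<N. \<not> gx a i = of_int (gc a i)"
    using exists_least_iff[of "\<lambda>i. gx a i = of_int (gc a i)"] by blast
  then show ?thesis using that by blast
qed

lemma irr_nonterm: assumes "a \<notin> \<rat>" "a > 0" shows "TT a j"
proof (induction j rule: less_induct)
  case (less j)
  then have T: "TT a i" if "i < j" for i using that by auto
  show ?case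
  proof (intro allI impI)
    fix i assume ij: "i < j"
    show "gx a i \<noteq> of_int (gc a i)"
    proof
      assume e: "gx a i = of_int (gc a i)"
      have Ti: "TT a i" using less ij by auto
      have "a * (of_int (QQ (gc a) (Suc i)) * gx a i + of_int (QQ (gc a) i)) =
         of_int (PP (gc a) (Suc i)) * gx a i + of_int (PP (gc a) i)" using gident[OF Ti] .
      moreover have q: "real_of_int (QQ (gc a) (Suc (Suc i))) = of_int (gc a i) * of_int (QQ (gc a) (Suc i)) + of_int (QQ (gc a) i)" by simp
      moreover have p: "real_of_int (PP (gc a) (Suc (Suc i))) = of_int (gc a i) * of_int (PP (gc a) (Suc i)) + of_int (PP (gc a) i)" by simp
      ultimately have "a * of_int (QQ (gc a) (Suc (Suc i))) = of_int (PP (gc a) (Suc (Suc i)))"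
        unfolding e by (simp add: algebra_simps del: QQ.simps PP.simps)
      moreover have "1 \<le> QQ (gc a) (Suc (Suc i))" using gQQ[OF Ti] by simp
      ultimately have "a = of_int (PP (gc a) (Suc (Suc i))) / of_int (QQ (gc a) (Suc (Suc i)))"
        by (simp add: eq_divide_eq del: QQ.simps PP.simps)
      then have "a \<in> \<rat>" by (metis Rats_divide Rats_of_int)
      then show False using assms by simp
    qed
  qed
qed



lemma fin_mem1:
  assumes "\<forall>i. 1 \<le> i \<and> i \<le> K \<longrightarrow> 1 \<le> c i" "j \<le> K" "0 \<le> m" "m \<le> c j"
  shows "m * QQ c (Suc j) + QQ c j \<in> semiconv_dens_fin c K"
proof (cases j)
  case 0
  have v: "m * QQ c (Suc j) + QQ c j = 1 * cf_q c (0+1) + cf_q c 0" using 0 by simp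
  show ?thesis
  proof (cases "K = 0")
    case True
    then show ?thesis unfolding v semiconv_dens_fin_def by (intro UnI2 CollectI exI[of _ 1]) simp
  next
    case False
    then have "(0::nat) < K" "(0::int) \<le> 1" "1 \<le> c (0+1)" using assms(1) by auto
    then show ?thesis unfolding v semiconv_dens_fin_def by blast
  qed
next
  case (Suc i)
  have v: "m * QQ c (Suc j) + QQ c j = m * cf_q c (i+1) + cf_q c i" using Suc by (simp add: QQ_cf)
  have "i < K" "m \<le> c (i+1)" using assms Suc by auto
  then show ?thesis unfolding v semiconv_dens_fin_def using assms(3) by blast
qed

lemma fin_mem2:
  assumes "\<forall>i. 1 \<le> i \<and> i \<le> K \<longrightarrow> 1 \<le> c i" "j \<le> K"
  shows "QQ c (Suc j) \<in> semiconv_dens_fin c K"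
proof -
  have v: "QQ c (Suc j) = 0 * cf_q c (j+1) + cf_q c j" by (simp add: QQ_cf)
  show ?thesis
  proof (cases "j = K")
    case True
    then show ?thesis unfolding v semiconv_dens_fin_def by blast
  next
    case False
    then have "j < K" "(0::int) \<le> c (j+1)" using assms by (auto intro: order.trans[OF zero_le_one])
    then show ?thesis unfolding v semiconv_dens_fin_def by blast
  qed
qed

lemma fin_mem3: "0 \<le> t \<Longrightarrow> t * QQ c (Suc (Suc K)) + QQ c (Suc K) \<in> semiconv_dens_fin c K"
  unfolding semiconv_dens_fin_def by (auto simp: QQ_cf)

lemma inf_mem1:
  assumes "\<forall>i\<ge>1. 1 \<le> c i" "0 \<le> m" "m \<le> c j"
  shows "m * QQ c (Suc j) + QQ c j \<in> semiconv_dens_inf c"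
proof (cases j)
  case 0
  have v: "m * QQ c (Suc j) + QQ c j = 0 * cf_q c (1+1) + cf_q c 1" using 0 by simp
  have "(0::int) \<le> c (1+1)" using assms(1) by (meson le_add2 order.trans zero_le_one)
  then show ?thesis unfolding v semiconv_dens_inf_def by blast
next
  case (Suc i)
  have v: "m * QQ c (Suc j) + QQ c j = m * cf_q c (i+1) + cf_q c i" using Suc by (simp add: QQ_cf)
  then show ?thesis unfolding v semiconv_dens_inf_def using assms Suc by auto
qed

lemma inf_mem2:
  assumes "\<forall>i\<ge>1. 1 \<le> c i"
  shows "QQ c (Suc j) \<in> semiconv_dens_inf c"
proof -
  have v: "QQ c (Suc j) = 0 * cf_q c (j+1) + cf_q c j" by (simp add: QQ_cf)
  have "(0::int) \<le> c (j+1)" using assms by (meson le_add2 order.trans zero_le_one)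
  then show ?thesis unfolding v semiconv_dens_inf_def by blast
qed

lemma fin_alt:
  assumes fe: "cf_fin_exp a c K" and c2: "1 \<le> K \<Longrightarrow> 2 \<le> c K" and t: "1 \<le> t"
  shows "cf_fin_exp a (c(K := c K - 1, Suc K := 1)) (Suc K) \<and>
    t * QQ c (Suc (Suc K)) - QQ c (Suc K) \<in> semiconv_dens_fin (c(K := c K - 1, Suc K := 1)) (Suc K)"
proof -
  define d where "d = c(K := c K - 1, Suc K := 1)"
  have ag: "\<forall>i<K. d i = c i" unfolding d_def by auto
  have q1: "QQ d (Suc K) = QQ c (Suc K)" "QQ d K = QQ c K" using QQ_agree[OF ag] by auto
  have p1: "PP d (Suc K) = PP c (Suc K)" "PP d K = PP c K" using PP_agree[OF ag] by auto
  have dK: "d K = c K - 1" "d (Suc K) = 1" unfolding d_def by auto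
  have q2: "QQ d (Suc (Suc K)) = QQ c (Suc (Suc K)) - QQ c (Suc K)"
  proof -
    have "QQ d (Suc (Suc K)) = d K * QQ d (Suc K) + QQ d K" by simp
    also have "\<dots> = (c K - 1) * QQ c (Suc K) + QQ c K" unfolding q1 dK ..
    also have "\<dots> = QQ c (Suc (Suc K)) - QQ c (Suc K)" by (simp add: algebra_simps)
    finally show ?thesis .
  qed
  have p2: "PP d (Suc (Suc K)) = PP c (Suc (Suc K)) - PP c (Suc K)"
  proof -
    have "PP d (Suc (Suc K)) = d K * PP d (Suc K) + PP d K" by simp
    also have "\<dots> = (c K - 1) * PP c (Suc K) + PP c K" unfolding p1 dK ..
    also have "\<dots> = PP c (Suc (Suc K)) - PP c (Suc K)" by (simp add: algebra_simps)
    finally show ?thesis .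
  qed
  have q3: "QQ d (Suc (Suc (Suc K))) = QQ c (Suc (Suc K))"
  proof -
    have "QQ d (Suc (Suc (Suc K))) = d (Suc K) * QQ d (Suc (Suc K)) + QQ d (Suc K)" by simp
    then show ?thesis using q1 q2 dK by simp
  qed
  have p3: "PP d (Suc (Suc (Suc K))) = PP c (Suc (Suc K))"
  proof -
    have "PP d (Suc (Suc (Suc K))) = d (Suc K) * PP d (Suc (Suc K)) + PP d (Suc K)" by simp
    then show ?thesis using p1 p2 dK by simp
  qed
  have digs: "\<forall>k. 1 \<le> k \<and> k \<le> Suc K \<longrightarrow> d k \<ge> 1"
  proof (intro allI impI)
    fix k assume k: "1 \<le> k \<and> k \<le> Suc K"
    show "d k \<ge> 1"
    proof (cases "k = Suc K")
      case True then show ?thesis using dK by simp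
    next
      case False
      show ?thesis
      proof (cases "k = K")
        case True then show ?thesis using dK c2 k by simp
      next
        case False
        then show ?thesis using \<open>k \<noteq> Suc K\<close> k fe unfolding d_def cf_fin_exp_def by auto
      qed
    qed
  qed
  have val: "a = real_of_int (cf_p d (Suc K + 1)) / real_of_int (cf_q d (Suc K + 1))"
    using fe p3 q3 unfolding cf_fin_exp_def by (simp add: PP_cf[symmetric] QQ_cf[symmetric])
  have "cf_fin_exp a d (Suc K)" unfolding cf_fin_exp_def using digs val by blast
  moreover have "t * QQ c (Suc (Suc K)) - QQ c (Suc K) = (t - 1) * cf_q d (Suc K + 1) + cf_q d (Suc K)"
    using q2 q3 by (simp add: QQ_cf[symmetric] algebra_simps)
  then have "t * QQ c (Suc (Suc K)) - QQ c (Suc K) \<in> semiconv_dens_fin d (Suc K)"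
    unfolding semiconv_dens_fin_def using t by auto
  ultimately show ?thesis unfolding d_def by blast
qed



lemma term_val: assumes "TT a N" "gx a N = of_int (gc a N)"
  shows "a * of_int (QQ (gc a) (Suc (Suc N))) = of_int (PP (gc a) (Suc (Suc N)))"
proof -
  have "a * (of_int (QQ (gc a) (Suc N)) * gx a N + of_int (QQ (gc a) N)) =
     of_int (PP (gc a) (Suc N)) * gx a N + of_int (PP (gc a) N)" using gident[OF assms(1)] .
  moreover have q: "real_of_int (QQ (gc a) (Suc (Suc N))) = of_int (gc a N) * of_int (QQ (gc a) (Suc N)) + of_int (QQ (gc a) N)" by simp
  moreover have p: "real_of_int (PP (gc a) (Suc (Suc N))) = of_int (gc a N) * of_int (PP (gc a) (Suc N)) + of_int (PP (gc a) N)" by simp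
  ultimately show ?thesis
    unfolding assms(2) by (simp add: algebra_simps del: QQ.simps PP.simps)
qed

lemma conv: assumes irr: "a \<notin> \<rat>" and pos: "a > 0" shows "cf_inf_exp a (gc a)"
proof -
  let ?c = "gc a"
  have T: "TT a j" for j using irr_nonterm[OF irr pos] .
  have dig: "\<forall>k\<ge>1. ?c k \<ge> 1" using gc_ge1 T by blast
  have bound: "\<bar>real_of_int (PP ?c (Suc (Suc k))) / of_int (QQ ?c (Suc (Suc k))) - a\<bar> \<le> 2 * inverse (real (Suc k))" for k
  proof -
    define P where "P = real_of_int (PP ?c (Suc (Suc k)))"
    define P1 where "P1 = real_of_int (PP ?c (Suc k))"
    define Q where "Q = real_of_int (QQ ?c (Suc (Suc k)))"
    define Q1 where "Q1 = real_of_int (QQ ?c (Suc k))"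
    define y where "y = gx a (Suc k)"
    have id: "a * (Q * y + Q1) = P * y + P1"
      using gident[OF T[of "Suc k"]] unfolding P_def P1_def Q_def Q1_def y_def by simp
    have dl: "P * Q1 - P1 * Q = (-1)^(Suc k)"
      using arg_cong[OF delta[of ?c "Suc k"], of real_of_int] unfolding P_def P1_def Q_def Q1_def by simp
    have y1: "y > 1" unfolding y_def using gx_gt1 T by blast
    have qg: "1 \<le> QQ ?c (Suc (Suc k)) \<and> 0 \<le> QQ ?c (Suc k)" using gQQ[OF T[of k]] .
    then have Q1p: "Q \<ge> 1" "Q1 \<ge> 0" unfolding Q_def Q1_def by (simp_all del: QQ.simps)
    have gr: "int k + 1 \<le> 2 * QQ ?c (Suc (Suc k))" using QQ_grow[of k ?c] dig by auto
    then have Qk: "real k + 1 \<le> 2 * Q" unfolding Q_def by linarith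
    have D: "Q * y + Q1 \<ge> Q" using Q1p y1 by (smt (verit) mult_le_cancel_left1)
    have "(P / Q - a) * ((Q * y + Q1) * Q) = P * (Q * y + Q1) - (a * (Q * y + Q1)) * Q"
      using Q1p by (simp add: field_simps)
    also have "\<dots> = P * Q1 - P1 * Q" unfolding id by (simp add: algebra_simps)
    finally have e0: "(P / Q - a) * ((Q * y + Q1) * Q) = (-1)^(Suc k)" using dl by simp
    have Mp: "(Q * y + Q1) * Q > 0" using D Q1p by simp
    have "\<bar>P / Q - a\<bar> * ((Q * y + Q1) * Q) = \<bar>(P / Q - a) * ((Q * y + Q1) * Q)\<bar>"
      using Mp by (simp only: abs_mult[of "P / Q - a"] abs_of_pos)
    then have e: "\<bar>P / Q - a\<bar> * ((Q * y + Q1) * Q) = 1" unfolding e0 by simp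
    have "(Q * y + Q1) * Q \<ge> Q" using D Q1p by (smt (verit) mult_le_cancel_right1)
    then have "\<bar>P / Q - a\<bar> * Q \<le> 1" using e
      by (smt (verit) abs_ge_zero mult_left_mono)
    then have "\<bar>P / Q - a\<bar> \<le> 1 / Q" using Q1p by (simp add: le_divide_eq)
    also have "\<dots> \<le> 2 * inverse (real (Suc k))" using Qk Q1p
      by (simp add: field_simps)
    finally show ?thesis unfolding P_def Q_def .
  qed
  have z: "(\<lambda>k. 2 * inverse (real (Suc k))) \<longlonglongrightarrow> 0"
    using tendsto_mult[OF tendsto_const[of 2] LIMSEQ_inverse_real_of_nat] by simp
  have lo: "(\<lambda>k. a - 2 * inverse (real (Suc k))) \<longlonglongrightarrow> a"
    using tendsto_diff[OF tendsto_const[of a] z] by simp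
  have hi: "(\<lambda>k. a + 2 * inverse (real (Suc k))) \<longlonglongrightarrow> a"
    using tendsto_add[OF tendsto_const[of a] z] by simp
  have "(\<lambda>k. real_of_int (PP ?c (Suc (Suc k))) / of_int (QQ ?c (Suc (Suc k)))) \<longlonglongrightarrow> a"
    by (rule tendsto_sandwich[OF _ _ lo hi]) (use bound in \<open>auto simp: abs_le_iff algebra_simps\<close>)
  then have "(\<lambda>k. real_of_int (cf_p ?c (k+1)) / real_of_int (cf_q ?c (k+1))) \<longlonglongrightarrow> a"
    by (simp add: PP_cf[symmetric] QQ_cf[symmetric])
  then show ?thesis unfolding cf_inf_exp_def using dig by blast
qed



theorem mainTheorem9:
  fixes n a b c d :: nat and \<alpha> :: real
  assumes "n > 0" and "a > 0" and "b > 0" and "c > 0" and "d > 0"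
    and "\<bar>int a * int d - int b * int c * int n\<bar> = 1"
    and "min (real a / (real c * real n)) (real b / real d) \<le> \<alpha>"
    and "\<alpha> \<le> max (real a / (real c * real n)) (real b / real d)"
  shows "\<not> infinite_loop n \<alpha>"
proof -
  define u where "u = (int a, int c * int n)"
  define w where "w = (int b, int d)"
  have "0 < min (real a / (real c * real n)) (real b / real d)" using assms(1-5) by simp
  then have pos: "\<alpha> > 0" using assms(7) by linarith
  have nn: "0 \<le> fst u" "0 \<le> snd u" "0 \<le> fst w" "0 \<le> snd w" by (simp_all add: u_def w_def)
  have det: "\<bar>fst u * snd w - fst w * snd u\<bar> = 1" using assms(6) by (simp add: u_def w_def algebra_simps)
  have cnp: "real c * real n > 0" "real d > 0" using assms(1,4,5) by simp_all
  have Lu: "LL \<alpha> u = real a - \<alpha> * (real c * real n)" by (simp add: LL_def u_def)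
  have Lw: "LL \<alpha> w = real b - \<alpha> * real d" by (simp add: LL_def w_def)
  have ct: "LL \<alpha> u * LL \<alpha> w \<le> 0"
  proof (cases "real a / (real c * real n) \<le> real b / real d")
    case True
    then have "real a / (real c * real n) \<le> \<alpha>" "\<alpha> \<le> real b / real d" using assms(7,8) by auto
    then have "LL \<alpha> u \<le> 0" "LL \<alpha> w \<ge> 0" unfolding Lu Lw using cnp
      by (simp_all add: divide_le_eq le_divide_eq mult.commute)
    then show ?thesis by (simp add: mult_nonpos_nonneg)
  next
    case False
    then have "real b / real d \<le> \<alpha>" "\<alpha> \<le> real a / (real c * real n)" using assms(7,8) by auto
    then have "LL \<alpha> u \<ge> 0" "LL \<alpha> w \<le> 0" unfolding Lu Lw using cnp
      by (simp_all add: divide_le_eq le_divide_eq mult.commute)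
    then show ?thesis by (simp add: mult_nonneg_nonpos)
  qed
  have cnz: "snd u \<noteq> 0" using assms(1,4) by (simp add: u_def)
  have dv: "int n dvd snd u" by (simp add: u_def)
  show ?thesis
  proof (cases "\<alpha> \<in> \<rat>")
    case False
    define S where "S = nat (snd u + snd w)"
    define N where "N = 2 * S + 2"
    have TN: "TT \<alpha> N" using irr_nonterm[OF False pos] .
    interpret desc "gc \<alpha>" "gx \<alpha>" \<alpha> N using desc_inst[OF pos TN] .
    have F: "Fam u w" using descent nn det ct by blast
    have dig: "\<forall>i\<ge>1. 1 \<le> gc \<alpha> i" using gc_ge1 irr_nonterm[OF False pos] by blast
    have "int (2*S+1) + 1 \<le> 2 * QQ (gc \<alpha>) (Suc (Suc (2*S+1)))"
      using QQ_grow[of "2*S+1" "gc \<alpha>"] dig by auto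
    then have "QQ (gc \<alpha>) (Suc N) > snd u + snd w" using nn unfolding N_def S_def by auto
    moreover have "gx \<alpha> N \<noteq> of_int (gc \<alpha> N)" using irr_nonterm[OF False pos, of "Suc N"] by auto
    ultimately obtain j m where jm: "j \<le> N" "0 \<le> m" "m \<le> gc \<alpha> j"
      "UP u w (Mv (gc \<alpha>) j m) (Bv (gc \<alpha>) (Suc j))"
      using F unfolding Fam_def by auto
    have "snd u \<in> semiconv_dens_inf (gc \<alpha>)"
    proof -
      from jm(4) have "snd u = m * QQ (gc \<alpha>) (Suc j) + QQ (gc \<alpha>) j \<or> snd u = QQ (gc \<alpha>) (Suc j)"
        unfolding UP_def by (auto simp: Mv_def vadd_def vsc_def Bv_def)
      then show ?thesis using inf_mem1[OF dig jm(2,3)] inf_mem2[OF dig] by auto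
    qed
    then show ?thesis unfolding infinite_loop_def using conv[OF False pos] cnz dv by blast
  next
    case True
    obtain N where TN: "TT \<alpha> N" "gx \<alpha> N = of_int (gc \<alpha> N)" using rat_term[OF True] by blast
    interpret desc "gc \<alpha>" "gx \<alpha>" \<alpha> N using desc_inst[OF pos TN(1)] .
    have F: "Fam u w" using descent nn det ct by blast
    let ?c = "gc \<alpha>"
    have dig: "\<forall>i. 1 \<le> i \<and> i \<le> N \<longrightarrow> 1 \<le> ?c i" using c_ge1 by blast
    have qpos: "1 \<le> QQ ?c (Suc (Suc N))" using QQ_N by simp
    have "\<alpha> * of_int (QQ ?c (Suc (Suc N))) = of_int (PP ?c (Suc (Suc N)))" using term_val[OF TN] .
    then have "\<alpha> = of_int (PP ?c (Suc (Suc N))) / of_int (QQ ?c (Suc (Suc N)))"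
      using qpos by (simp add: eq_divide_eq del: QQ.simps PP.simps)
    then have fe: "cf_fin_exp \<alpha> ?c N" unfolding cf_fin_exp_def using dig
      by (simp add: PP_cf QQ_cf del: QQ.simps PP.simps)
    have c0N: "0 \<le> ?c N" using c0 c_ge1[of N] by (cases N) auto
    have c2: "1 \<le> N \<Longrightarrow> 2 \<le> ?c N"
    proof -
      assume that: "1 \<le> N"
      have "gx \<alpha> N > 1" using gx_gt1[where a=\<alpha> and i="N - 1"] TN that by simp
      then show ?thesis using TN(2) by simp
    qed
    have Eden: "QQ ?c (Suc (Suc N)) \<in> semiconv_dens_fin ?c N"
      using fin_mem1[OF dig order.refl c0N order.refl] by simp
    have "\<exists>cf K. cf_fin_exp \<alpha> cf K \<and> snd u \<in> semiconv_dens_fin cf K"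
    proof -
      from F consider (P) j m where "j \<le> N" "0 \<le> m" "m \<le> ?c j" "UP u w (Mv ?c j m) (Bv ?c (Suc j))"
        | (F2) t where "t \<ge> 1" "UP u w (Bv ?c (Suc (Suc N))) (vadd (Bv ?c (Suc N)) (vsc t (Bv ?c (Suc (Suc N)))))"
        | (F3) t where "t \<ge> 1" "UP u w (Bv ?c (Suc (Suc N))) (vadd (vsc t (Bv ?c (Suc (Suc N)))) (vsc (-1) (Bv ?c (Suc N))))"
        unfolding Fam_def using TN(2) by auto
      then show ?thesis
      proof cases
        case P
        from P(4) have "snd u = m * QQ ?c (Suc j) + QQ ?c j \<or> snd u = QQ ?c (Suc j)"
          unfolding UP_def by (auto simp: Mv_def vadd_def vsc_def Bv_def)
        then show ?thesis using fin_mem1[OF dig P(1-3)] fin_mem2[OF dig P(1)] fe by metis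
      next
        case F2
        from F2(2) have "snd u = QQ ?c (Suc (Suc N)) \<or> snd u = t * QQ ?c (Suc (Suc N)) + QQ ?c (Suc N)"
          unfolding UP_def by (auto simp: vadd_def vsc_def Bv_def simp del: QQ.simps)
        then show ?thesis using Eden fin_mem3[of t ?c N] F2(1) fe by (metis order_trans zero_le_one)
      next
        case F3
        from F3(2) have "snd u = QQ ?c (Suc (Suc N)) \<or> snd u = t * QQ ?c (Suc (Suc N)) - QQ ?c (Suc N)"
          unfolding UP_def by (auto simp: vadd_def vsc_def Bv_def simp del: QQ.simps)
        moreover have "cf_fin_exp \<alpha> (?c(N := ?c N - 1, Suc N := 1)) (Suc N) \<and>
          t * QQ ?c (Suc (Suc N)) - QQ ?c (Suc N) \<in> semiconv_dens_fin (?c(N := ?c N - 1, Suc N := 1)) (Suc N)"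
          by (rule fin_alt[OF fe]) (use c2 F3(1) in auto)
        ultimately show ?thesis using Eden fe by metis
      qed
    qed
    then show ?thesis unfolding infinite_loop_def using cnz dv by blast
  qed
qed


end
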